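(* Let $A\in\mathbb{R}^{m\times n}$ with $A\geq 0$ and $A^{\dagger}\geq 0$. Let $A=M-N=U-V$ be two proper regular splittings of $A$ such that $R(M+U-A)=R(A)$ and $N(M+U-A)=N(A)$. Then, with $H=U^{\dagger}VM^{\dagger}N$, $$\rho(H)\leq \min\{\rho(U^{\dagger}V),\rho(M^{\dagger}N)\}<1.$$
   Context: All matrices are real. $X^{\dagger}$ denotes the Moore–Penrose inverse of $X$, and $\rho(\cdot)$ the spectral radius. For a matrix $X$, $X\geq 0$ means that all entries of $X$ are nonnegative and at least one entry is positive; $X\geq Y$ means $X-Y\geq 0$. $R(X)$ and $N(X)$ denote range and null space. A splitting $A=U-V$ is proper if $R(U)=R(A)$ and $N(U)=N(A)$; it is a proper regular splitting if it is proper, $U^{\dagger}\geq 0$ and $V\geq 0$. A matrix $A$ is semi-monotone if $A^{\dagger}\geq 0$. *)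

theory Defs
  imports "HOL-Analysis.Analysis"
begin

definition mp_inverse :: "real^'n^'m \<Rightarrow> real^'m^'n" where
  "mp_inverse A = (THE X. A ** X ** A = A \<and> X ** A ** X = X \<and>
       transpose (A ** X) = A ** X \<and> transpose (X ** A) = X ** A)"

definition mat_range :: "real^'n^'m \<Rightarrow> (real^'m) set" where
  "mat_range A = range (\<lambda>x. A *v x)"

definition mat_null :: "real^'n^'m \<Rightarrow> (real^'n) set" where
  "mat_null A = {x. A *v x = 0}"

text \<open>Entrywise nonnegative with at least one positive entry (the paper's X \<ge> 0).\<close>
definition nonneg_mat :: "real^'n^'m \<Rightarrow> bool" where
  "nonneg_mat X \<longleftrightarrow> (\<forall>i j. X $ i $ j \<ge> 0) \<and> (\<exists>i j. X $ i $ j > 0)"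

definition complex_eigenvalue :: "real^'n^'n \<Rightarrow> complex \<Rightarrow> bool" where
  "complex_eigenvalue A c \<longleftrightarrow>
     (\<exists>v :: complex^'n. v \<noteq> 0 \<and> (\<chi> i j. complex_of_real (A $ i $ j)) *v v = c *s v)"

definition spectral_radius :: "real^'n^'n \<Rightarrow> real" where
  "spectral_radius A = Max {cmod c | c. complex_eigenvalue A c}"

definition proper_splitting :: "real^'n^'m \<Rightarrow> real^'n^'m \<Rightarrow> real^'n^'m \<Rightarrow> bool" where
  "proper_splitting A U V \<longleftrightarrow> A = U - V \<and> mat_range U = mat_range A \<and> mat_null U = mat_null A"

definition proper_regular_splitting :: "real^'n^'m \<Rightarrow> real^'n^'m \<Rightarrow> real^'n^'m \<Rightarrow> bool" where
  "proper_regular_splitting A U V \<longleftrightarrow>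
     proper_splitting A U V \<and> nonneg_mat (mp_inverse U) \<and> nonneg_mat V"

end

theory Submission
  imports Defs
begin


lemma proj_exists:
  fixes S :: "(real^'n) set"
  shows "\<exists>P::real^'n^'n. transpose P = P \<and> (\<forall>x. P *v x \<in> span S) \<and>
           (\<forall>x w. w \<in> span S \<longrightarrow> orthogonal w (x - P *v x))"
proof -
  obtain T where T: "0 \<notin> T" "T \<subseteq> span S" "pairwise orthogonal T" "independent T"
    "card T = dim (span S)" "span T = span S"
    using orthogonal_basis_subspace subspace_span by blast
  have fT: "finite T" using T(3) pairwise_orthogonal_imp_finite by blast
  define P :: "real^'n^'n" where "P = (\<chi> i j. \<Sum>b\<in>T. b$i * b$j / (b \<bullet> b))"
  have Pv: "P *v x = (\<Sum>b\<in>T. (b \<bullet> x / (b \<bullet> b)) *\<^sub>R b)" for x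
  proof -
    have "(P *v x) $ i = (\<Sum>b\<in>T. (b \<bullet> x / (b \<bullet> b)) *\<^sub>R b) $ i" for i
    proof -
      have "(P *v x) $ i = (\<Sum>j\<in>UNIV. (\<Sum>b\<in>T. b$i * b$j / (b \<bullet> b)) * x$j)"
        by (simp add: P_def matrix_vector_mult_def)
      also have "\<dots> = (\<Sum>b\<in>T. \<Sum>j\<in>UNIV. b$i * b$j / (b \<bullet> b) * x$j)"
        by (simp add: sum_distrib_right sum.swap[of _ T])
      also have "\<dots> = (\<Sum>b\<in>T. (b \<bullet> x / (b \<bullet> b)) * b $ i)"
        by (rule sum.cong) (auto simp: inner_vec_def sum_distrib_right sum_divide_distrib intro!: sum.cong)
      also have "\<dots> = (\<Sum>b\<in>T. (b \<bullet> x / (b \<bullet> b)) *\<^sub>R b) $ i"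
        by (simp add: sum_component)
      finally show ?thesis .
    qed
    then show ?thesis by (simp add: vec_eq_iff)
  qed
  have "transpose P = P" by (simp add: P_def transpose_def mult.commute)
  moreover have "P *v x \<in> span S" for x
    unfolding Pv T(6)[symmetric] by (intro span_sum span_mul span_base) 
  moreover have "orthogonal w (x - P *v x)" if "w \<in> span S" for x w
    unfolding Pv using Gram_Schmidt_step[OF T(3)] that T(6) by auto
  ultimately show ?thesis by blast
qed



definition pen :: "real^'n^'m \<Rightarrow> real^'m^'n \<Rightarrow> bool" where
  "pen A X \<longleftrightarrow> A ** X ** A = A \<and> X ** A ** X = X \<and>
       transpose (A ** X) = A ** X \<and> transpose (X ** A) = X ** A"

lemma matrix_sub_ldistrib: "(A::real^'n^'m) ** (B - C) = A ** B - A ** C"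
  by (simp add: vec_eq_iff matrix_matrix_mult_def algebra_simps sum_subtractf)
lemma matrix_sub_rdistrib: "((A::real^'n^'m) - B) ** C = A ** C - B ** C"
  by (simp add: vec_eq_iff matrix_matrix_mult_def algebra_simps sum_subtractf)
lemma matrix_add_rdistrib: "((A::real^'n^'m) + B) ** C = A ** C + B ** C"
  by (simp add: vec_eq_iff matrix_matrix_mult_def algebra_simps sum.distrib)
lemma transpose_diff: "transpose ((A::real^'n^'m) - B) = transpose A - transpose B"
  by (simp add: vec_eq_iff transpose_def)

lemma proj_fix:
  assumes "\<forall>x w. w \<in> span S \<longrightarrow> orthogonal w (x - P *v x)" "\<forall>x. P *v x \<in> span S"
    and "x \<in> span S"
  shows "P *v x = x"
proof -
  have "x - P *v x \<in> span S" using assms by (simp add: span_diff)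
  with assms(1) have "orthogonal (x - P *v x) (x - P *v x)" by blast
  thus ?thesis by (metis orthogonal_self eq_iff_diff_eq_0)
qed

lemma mp_unique:
  assumes "pen A X" "pen A Y" shows "X = Y"
proof -
  have X1: "A ** X ** A = A" and X2: "X ** A ** X = X" and X3: "transpose (A ** X) = A ** X"
    and X4: "transpose (X ** A) = X ** A" using assms(1) unfolding pen_def by auto
  have Y1: "A ** Y ** A = A" and Y2: "Y ** A ** Y = Y" and Y3: "transpose (A ** Y) = A ** Y"
    and Y4: "transpose (Y ** A) = Y ** A" using assms(2) unfolding pen_def by auto
  have tA1: "transpose A = transpose A ** (A ** Y)"
    by (metis Y1 Y3 matrix_transpose_mul matrix_mul_assoc)
  have tA2: "transpose A = (X ** A) ** transpose A"
    by (metis X1 X4 matrix_transpose_mul matrix_mul_assoc)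
  have "X = X ** (transpose X ** transpose A)"
    by (metis X2 X3 matrix_transpose_mul matrix_mul_assoc)
  also have "\<dots> = X ** (transpose X ** transpose A) ** (A ** Y)"
    by (metis tA1 matrix_mul_assoc)
  also have "\<dots> = X ** A ** Y"
    by (metis X2 X3 matrix_transpose_mul matrix_mul_assoc)
  finally have eX: "X = X ** A ** Y" .
  have "Y = (transpose A ** transpose Y) ** Y"
    by (metis Y2 Y4 matrix_transpose_mul matrix_mul_assoc)
  also have "\<dots> = (X ** A) ** (transpose A ** transpose Y) ** Y"
    by (metis tA2 matrix_mul_assoc)
  also have "\<dots> = X ** A ** Y"
    by (metis Y2 Y4 matrix_transpose_mul matrix_mul_assoc)
  finally show ?thesis using eX by simp
qed

lemma mp_exists: "\<exists>X. pen (A::real^'n^'m) X"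
proof -
  define SR where "SR = range (\<lambda>x. A *v x)"
  define SK where "SK = {x. A *v x = 0}"
  have sSR: "span SR = SR"
  proof -
    have "subspace SR" unfolding subspace_def SR_def
    proof (intro conjI ballI allI)
      show "0 \<in> range ((*v) A)" by (metis rangeI matrix_vector_mult_0_right)
      fix x y assume "x \<in> range ((*v) A)" "y \<in> range ((*v) A)"
      then obtain a b where "x = A *v a" "y = A *v b" by auto
      thus "x + y \<in> range ((*v) A)" by (metis rangeI matrix_vector_right_distrib)
    next
      fix c x assume "x \<in> range ((*v) A)"
      then obtain a where "x = A *v a" by auto
      thus "c *\<^sub>R x \<in> range ((*v) A)" by (metis rangeI matrix_vector_mult_scaleR)
    qed
    thus ?thesis by (simp add: span_eq_iff)
  qed
  have sSK: "span SK = SK" unfolding SK_def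
    by (auto simp: span_eq_iff subspace_def matrix_vector_right_distrib matrix_vector_mult_scaleR)
  obtain PR :: "real^'m^'m" where PR: "transpose PR = PR" "\<forall>x. PR *v x \<in> span SR"
      "\<forall>x w. w \<in> span SR \<longrightarrow> orthogonal w (x - PR *v x)"
    using proj_exists by blast
  obtain PK :: "real^'n^'n" where PK: "transpose PK = PK" "\<forall>x. PK *v x \<in> span SK"
      "\<forall>x w. w \<in> span SK \<longrightarrow> orthogonal w (x - PK *v x)"
    using proj_exists by blast
  define G :: "real^'m^'n" where "G = (\<chi> i j. (SOME v. A *v v = PR *v axis j 1) $ i)"
  have AG: "A ** G = PR"
  proof -
    have "(A ** G) $ i $ j = PR $ i $ j" for i j
    proof -
      have "PR *v axis j 1 \<in> SR" using PR(2) sSR by auto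
      then obtain v where "A *v v = PR *v axis j 1" unfolding SR_def by auto
      hence sv: "A *v (SOME v. A *v v = PR *v axis j 1) = PR *v axis j 1" by (rule someI)
      have "(A ** G) $ i $ j = (A *v (SOME v. A *v v = PR *v axis j 1)) $ i"
        by (simp add: G_def matrix_matrix_mult_def matrix_vector_mult_def)
      also have "\<dots> = PR $ i $ j" unfolding sv
        by (simp add: matrix_vector_mult_def axis_def if_distrib cong: if_cong)
      finally show ?thesis .
    qed
    thus ?thesis by (simp add: vec_eq_iff)
  qed
  have PRA: "PR ** A = A"
    by (subst matrix_eq) (metis PR(2,3) matrix_vector_mul_assoc proj_fix rangeI sSR SR_def)
  have PRPR: "PR ** PR = PR"
    by (subst matrix_eq) (metis PR(2,3) matrix_vector_mul_assoc proj_fix)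
  have APK: "A ** PK = 0"
  proof (subst matrix_eq, intro allI)
    fix x
    have "PK *v x \<in> SK" using PK(2) sSK by auto
    thus "(A ** PK) *v x = 0 *v x" by (simp add: SK_def matrix_vector_mul_assoc[symmetric])
  qed
  have PKPK: "PK ** PK = PK"
    by (subst matrix_eq) (metis PK(2,3) matrix_vector_mul_assoc proj_fix)
  define Q where "Q = mat 1 - PK"
  have tQ: "transpose Q = Q" using PK(1) by (simp add: Q_def transpose_diff)
  have QQ: "Q ** Q = Q" by (simp add: Q_def matrix_sub_ldistrib matrix_sub_rdistrib PKPK)
  have AQ: "A ** Q = A" by (simp add: Q_def matrix_sub_ldistrib APK)
  have QGA: "Q ** G ** A = Q"
  proof (subst matrix_eq, intro allI)
    fix v
    define u where "u = G *v (A *v v)"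
    have "A *v u = A *v v" unfolding u_def
      by (metis AG PRA matrix_vector_mul_assoc)
    hence "u - v \<in> SK" by (simp add: SK_def matrix_vector_mult_diff_distrib)
    hence "PK *v (u - v) = u - v" using proj_fix[OF PK(3,2)] sSK by auto
    hence "Q *v u = Q *v v"
      by (simp add: Q_def matrix_vector_mult_diff_rdistrib matrix_vector_mult_diff_distrib algebra_simps)
    thus "(Q ** G ** A) *v v = Q *v v" by (simp add: u_def matrix_vector_mul_assoc[symmetric])
  qed
  define X where "X = Q ** G ** PR"
  have AX: "A ** X = PR" unfolding X_def
    by (metis AG AQ PRPR matrix_mul_assoc)
  have XA: "X ** A = Q" unfolding X_def
    by (metis PRA QGA matrix_mul_assoc)
  have "pen A X" unfolding pen_def
    using AX XA PRA PR(1) tQ QQ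
    by (metis X_def matrix_mul_assoc)
  thus ?thesis by blast
qed

lemma pen_mp: "pen A (mp_inverse A)"
proof -
  have "\<exists>!X. pen A X" using mp_exists mp_unique by blast
  hence "pen A (THE X. pen A X)" by (rule theI')
  thus ?thesis unfolding mp_inverse_def pen_def[symmetric] .
qed



lemma symidem_eq_null:
  fixes E F :: "real^'n^'n"
  assumes "transpose E = E" "transpose F = F" "E ** E = E" "F ** F = F"
    and "\<And>x. E *v x = 0 \<longleftrightarrow> F *v x = 0"
  shows "E = F"
proof -
  have EF: "E ** F = E"
  proof (subst matrix_eq, intro allI)
    fix x
    have "F *v (x - F *v x) = 0"
      by (simp add: matrix_vector_mult_diff_distrib matrix_vector_mul_assoc assms(4))
    hence "E *v (x - F *v x) = 0" using assms(5) by blast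
    thus "(E ** F) *v x = E *v x" by (simp add: matrix_vector_mult_diff_distrib matrix_vector_mul_assoc)
  qed
  have FE: "F ** E = F"
  proof (subst matrix_eq, intro allI)
    fix x
    have "E *v (x - E *v x) = 0"
      by (simp add: matrix_vector_mult_diff_distrib matrix_vector_mul_assoc assms(3))
    hence "F *v (x - E *v x) = 0" using assms(5) by blast
    thus "(F ** E) *v x = F *v x" by (simp add: matrix_vector_mult_diff_distrib matrix_vector_mul_assoc)
  qed
  have "E = transpose (E ** F)" using EF assms(1) by simp
  also have "\<dots> = F ** E" by (simp add: matrix_transpose_mul assms(1,2))
  finally show ?thesis using FE by simp
qed

lemma symidem_eq_range:
  fixes E F :: "real^'n^'n"
  assumes "transpose E = E" "transpose F = F" "E ** E = E" "F ** F = F"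
    and "range ((*v) E) = range ((*v) F)"
  shows "E = F"
proof -
  have fixE: "E *v y = y" if yE: "y \<in> range ((*v) E)" for y
  proof -
    obtain x where "y = E *v x" using yE by (blast elim: rangeE)
    thus ?thesis using assms(3) by (simp add: matrix_vector_mul_assoc)
  qed
  have fixF: "F *v y = y" if yF: "y \<in> range ((*v) F)" for y
  proof -
    obtain x where "y = F *v x" using yF by (blast elim: rangeE)
    thus ?thesis using assms(4) by (simp add: matrix_vector_mul_assoc)
  qed
  have EF: "E ** F = F"
  proof (subst matrix_eq, intro allI)
    fix x
    have "F *v x \<in> range ((*v) E)" unfolding assms(5) by (rule rangeI)
    from fixE[OF this] show "(E ** F) *v x = F *v x" by (simp add: matrix_vector_mul_assoc[symmetric])
  qed
  have FE: "F ** E = E"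
  proof (subst matrix_eq, intro allI)
    fix x
    have "E *v x \<in> range ((*v) F)" unfolding assms(5)[symmetric] by (rule rangeI)
    from fixF[OF this] show "(F ** E) *v x = E *v x" by (simp add: matrix_vector_mul_assoc[symmetric])
  qed
  have "E = transpose (F ** E)" using FE assms(1) by simp
  also have "\<dots> = E ** F" by (simp add: matrix_transpose_mul assms(1,2))
  finally show ?thesis using EF by simp
qed
lemma pen_range: assumes "pen A X" shows "range ((*v) (A ** X)) = range ((*v) A)"
proof -
  have "A ** X ** A = A" using assms by (simp add: pen_def)
  show ?thesis
  proof (intro set_eqI iffI)
    fix y assume "y \<in> range ((*v) (A ** X))"
    then obtain x where "y = (A ** X) *v x" by auto
    hence "y = A *v (X *v x)" by (simp add: matrix_vector_mul_assoc)
    thus "y \<in> range ((*v) A)" by auto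
  next
    fix y assume "y \<in> range ((*v) A)"
    then obtain x where "y = A *v x" by auto
    hence "y = (A ** X) *v (A *v x)" using \<open>A ** X ** A = A\<close> by (simp add: matrix_vector_mul_assoc)
    thus "y \<in> range ((*v) (A ** X))" by auto
  qed
qed

lemma pen_null: assumes "pen A X" shows "(X ** A) *v x = 0 \<longleftrightarrow> A *v x = 0"
proof -
  have "A ** X ** A = A" using assms by (simp add: pen_def)
  show ?thesis
  proof
    assume "(X ** A) *v x = 0"
    hence "A *v ((X ** A) *v x) = 0" by simp
    thus "A *v x = 0" using \<open>A ** X ** A = A\<close> by (simp add: matrix_vector_mul_assoc matrix_mul_assoc)
  next
    assume "A *v x = 0"
    thus "(X ** A) *v x = 0" by (simp add: matrix_vector_mul_assoc[symmetric])
  qed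
qed

lemma pen_idem: assumes "pen A X" shows "(A ** X) ** (A ** X) = A ** X" "(X ** A) ** (X ** A) = X ** A"
  using assms by (simp_all add: pen_def matrix_mul_assoc)

lemma proper_proj:
  fixes A U :: "real^'n^'m"
  assumes "pen A Ad" "pen U Ud" "mat_range U = mat_range A" "mat_null U = mat_null A"
  shows "U ** Ud = A ** Ad" "Ud ** U = Ad ** A"
proof -
  have t1: "transpose (U ** Ud) = U ** Ud" "transpose (A ** Ad) = A ** Ad"
    "transpose (Ud ** U) = Ud ** U" "transpose (Ad ** A) = Ad ** A"
    using assms(1,2) unfolding pen_def by blast+
  have r: "range ((*v) (U ** Ud)) = range ((*v) (A ** Ad))"
    unfolding pen_range[OF assms(1)] pen_range[OF assms(2)] using assms(3) by (simp add: mat_range_def)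
  show "U ** Ud = A ** Ad"
    by (rule symidem_eq_range[OF t1(1,2) pen_idem(1)[OF assms(2)] pen_idem(1)[OF assms(1)] r])
  have "\<And>x. U *v x = 0 \<longleftrightarrow> A *v x = 0" using assms(4) by (auto simp: mat_null_def set_eq_iff)
  then have "\<And>x. (Ud ** U) *v x = 0 \<longleftrightarrow> (Ad ** A) *v x = 0"
    using pen_null[OF assms(1)] pen_null[OF assms(2)] by blast
  then show "Ud ** U = Ad ** A"
    by (rule symidem_eq_null[OF t1(3,4) pen_idem(2)[OF assms(2)] pen_idem(2)[OF assms(1)]])
qed



definition cmat :: "real^'n^'m \<Rightarrow> complex^'n^'m" where
  "cmat A = (\<chi> i j. complex_of_real (A $ i $ j))"

lemma ce_cmat: "complex_eigenvalue A c \<longleftrightarrow> (\<exists>v. v \<noteq> 0 \<and> cmat A *v v = c *s v)"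
  by (simp add: complex_eigenvalue_def cmat_def)

lemma mv_sum: "(C::complex^'n^'m) *v (\<Sum>c\<in>S. f c) = (\<Sum>c\<in>S. C *v f c)"
  by (simp add: vec_eq_iff matrix_vector_mult_def sum_component sum_distrib_left sum.swap[of _ S])

lemma smult_sum: "(d::complex) *s (\<Sum>c\<in>S. f c) = (\<Sum>c\<in>S. d *s f c)"
  by (simp add: vec_eq_iff sum_component sum_distrib_left)

lemma eig_indep:
  fixes C :: "complex^'n^'n"
  assumes ev: "\<And>c. c \<in> E \<Longrightarrow> ev c \<noteq> 0 \<and> C *v ev c = c *s ev c"
  shows "finite S \<Longrightarrow> S \<subseteq> E \<Longrightarrow> (\<Sum>c\<in>S. a c *s ev c) = 0 \<Longrightarrow> \<forall>c\<in>S. a c = 0"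
proof (induction S arbitrary: a rule: finite_induct)
  case empty thus ?case by simp
next
  case (insert d S)
  have sum: "a d *s ev d + (\<Sum>c\<in>S. a c *s ev c) = 0" using insert by simp
  have e1: "C *v (\<Sum>c\<in>S. a c *s ev c) = (\<Sum>c\<in>S. (a c * c) *s ev c)"
    unfolding mv_sum
  proof (rule sum.cong)
    fix c assume "c \<in> S"
    hence "C *v ev c = c *s ev c" using insert(4) ev by blast
    thus "C *v (a c *s ev c) = (a c * c) *s ev c" by (simp add: vector_scalar_commute vector_smult_assoc mult.commute)
  qed simp
  have "C *v ev d = d *s ev d" using insert(4) ev by blast
  hence e2: "C *v (a d *s ev d) = (a d * d) *s ev d"
    by (simp add: vector_scalar_commute vector_smult_assoc mult.commute)
  have "C *v (a d *s ev d + (\<Sum>c\<in>S. a c *s ev c)) - d *s (a d *s ev d + (\<Sum>c\<in>S. a c *s ev c)) = 0"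
    unfolding sum by simp
  moreover have e3: "d *s (\<Sum>c\<in>S. a c *s ev c) = (\<Sum>c\<in>S. (d * a c) *s ev c)"
    unfolding smult_sum by (simp add: vector_smult_assoc)
  ultimately have "(\<Sum>c\<in>S. (a c * c) *s ev c) - (\<Sum>c\<in>S. (d * a c) *s ev c) = 0"
    unfolding matrix_vector_right_distrib e1 e2 vector_add_ldistrib e3
    by (simp add: vector_smult_assoc mult.commute)
  hence "(\<Sum>c\<in>S. (a c * (c - d)) *s ev c) = 0"
  proof -
    assume h: "(\<Sum>c\<in>S. (a c * c) *s ev c) - (\<Sum>c\<in>S. (d * a c) *s ev c) = 0"
    have "(\<Sum>c\<in>S. (a c * (c - d)) *s ev c) = (\<Sum>c\<in>S. (a c * c) *s ev c) - (\<Sum>c\<in>S. (d * a c) *s ev c)"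
      by (simp add: vec_eq_iff sum_component sum_subtractf[symmetric] right_diff_distrib left_diff_distrib mult.commute mult.left_commute)
    thus ?thesis using h by simp
  qed
  hence "\<forall>c\<in>S. a c * (c - d) = 0" using insert.IH[of "\<lambda>c. a c * (c - d)"] insert.prems by blast
  hence a0: "\<forall>c\<in>S. a c = 0" using insert(2) by auto
  hence "a d *s ev d = 0" using sum by simp
  moreover have "ev d \<noteq> 0" using insert(4) ev by blast
  ultimately have "a d = 0" by simp
  thus ?case using a0 by auto
qed

lemma eig_finite: "finite {c. complex_eigenvalue A c}"
proof -
  define E where "E = {c. complex_eigenvalue A c}"
  define C where "C = cmat A"
  define ev where "ev c = (SOME v. v \<noteq> 0 \<and> C *v v = c *s v)" for c
  have ev: "ev c \<noteq> 0 \<and> C *v ev c = c *s ev c" if "c \<in> E" for c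
  proof -
    have "\<exists>v. v \<noteq> 0 \<and> C *v v = c *s v" using that by (simp add: E_def C_def ce_cmat)
    thus ?thesis unfolding ev_def by (rule someI_ex)
  qed
  have inj: "inj_on ev E"
  proof (rule inj_onI)
    fix c d assume cd: "c \<in> E" "d \<in> E" "ev c = ev d"
    have h1: "C *v ev c = c *s ev c" using ev[OF cd(1)] by (rule conjunct2)
    have h2: "C *v ev d = d *s ev d" using ev[OF cd(2)] by (rule conjunct2)
    have h3: "C *v ev c = d *s ev c" using h2 unfolding cd(3) .
    have "(c - d) *s ev c = c *s ev c - d *s ev c" by (rule vector_sub_rdistrib)
    also have "\<dots> = 0" unfolding h1[symmetric] h3[symmetric] by simp
    finally have "(c - d) *s ev c = 0" .
    moreover have "ev c \<noteq> 0" using ev[OF cd(1)] by (rule conjunct1)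
    ultimately show "c = d" by simp
  qed
  have "vec.independent (ev ` E)"
  proof
    assume "vec.dependent (ev ` E)"
    then obtain T u where T: "finite T" "T \<subseteq> ev ` E" "(\<Sum>v\<in>T. u v *s v) = 0" "\<exists>v\<in>T. u v \<noteq> 0"
      unfolding vec.dependent_explicit by blast
    define S where "S = {c\<in>E. ev c \<in> T}"
    have TS: "T = ev ` S" using T(2) unfolding S_def by blast
    have injS: "inj_on ev S" using inj unfolding S_def by (rule inj_on_subset) auto
    have fS: "finite S" using T(1) injS unfolding TS by (simp add: finite_image_iff)
    have sumS: "(\<Sum>c\<in>S. u (ev c) *s ev c) = 0" using T(3) unfolding TS sum.reindex[OF injS] by simp
    moreover have SE: "S \<subseteq> E" unfolding S_def by blast
    have "\<forall>c\<in>S. u (ev c) = 0"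
      by (rule eig_indep[where E=E and ev=ev and C=C and a="\<lambda>c. u (ev c)"], erule ev, rule fS, rule SE, rule sumS)
    thus False using T(4) unfolding TS by blast
  qed
  hence "finite (ev ` E)" by (rule vec.finiteI_independent)
  hence "finite E" using inj by (simp add: finite_image_iff)
  thus ?thesis unfolding E_def .
qed



lemma mat_mv: "mat c *v (v::'a::comm_ring_1^'n) = c *s v"
proof -
  have "(\<Sum>j\<in>UNIV. (if i = j then c else 0) * v$j) = (\<Sum>j\<in>UNIV. if i = j then c * v$j else 0)" for i
    by (rule sum.cong) auto
  thus ?thesis by (simp add: vec_eq_iff matrix_vector_mult_def mat_def)
qed

lemma real_eig:
  fixes T :: "real^'n^'n"
  assumes "T *v x = l *\<^sub>R x" "x \<noteq> 0"
  shows "complex_eigenvalue T (complex_of_real l)"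
proof -
  define v :: "complex^'n" where "v = (\<chi> i. complex_of_real (x $ i))"
  have "v \<noteq> 0" using assms(2) by (auto simp: v_def vec_eq_iff)
  moreover have "cmat T *v v = complex_of_real l *s v"
  proof -
    have "(cmat T *v v) $ i = (complex_of_real l *s v) $ i" for i
    proof -
      have "(cmat T *v v) $ i = complex_of_real ((T *v x) $ i)"
        by (simp add: cmat_def v_def matrix_vector_mult_def)
      also have "\<dots> = (complex_of_real l *s v) $ i" using assms(1) by (simp add: v_def)
      finally show ?thesis .
    qed
    thus ?thesis by (simp add: vec_eq_iff)
  qed
  ultimately show ?thesis by (auto simp: ce_cmat)
qed

lemma cmat_transpose: "cmat (transpose A) = transpose (cmat A)"
  by (simp add: cmat_def transpose_def)

lemma eig_transpose:
  assumes "complex_eigenvalue A c" shows "complex_eigenvalue (transpose A) c"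
proof -
  obtain v where v: "v \<noteq> 0" "cmat A *v v = c *s v" using assms by (auto simp: ce_cmat)
  define D where "D = cmat A - mat c"
  have "D *v v = 0" using v by (simp add: D_def matrix_vector_mult_diff_rdistrib mat_mv)
  hence "\<not> (\<exists>B. B ** D = mat 1)" using v(1) matrix_left_invertible_ker[of D] by blast
  hence "\<not> invertible D" using invertible_left_inverse by blast
  hence "det D = 0" using invertible_det_nz by blast
  hence "det (transpose D) = 0" by simp
  hence "\<not> invertible (transpose D)" using invertible_det_nz by blast
  hence "\<not> (\<exists>B. B ** transpose D = mat 1)" using invertible_left_inverse by blast
  then obtain w where w: "transpose D *v w = 0" "w \<noteq> 0" using matrix_left_invertible_ker by blast
  have "transpose D = cmat (transpose A) - mat c"
    by (simp add: D_def cmat_def vec_eq_iff transpose_def mat_def)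
  hence "cmat (transpose A) *v w = c *s w" using w(1)
    by (simp add: matrix_vector_mult_diff_rdistrib mat_mv)
  thus ?thesis using w(2) by (auto simp: ce_cmat)
qed

lemma eig_transpose_iff: "complex_eigenvalue (transpose A) c \<longleftrightarrow> complex_eigenvalue A c"
  using eig_transpose[of A c] eig_transpose[of "transpose A" c] by auto

lemma abs_trick:
  fixes T :: "real^'n^'n"
  assumes nn: "\<forall>i j. T $ i $ j \<ge> 0" and ev: "complex_eigenvalue T c"
  shows "\<exists>y. (\<forall>i. y $ i \<ge> 0) \<and> y \<noteq> 0 \<and> (\<forall>i. cmod c * y $ i \<le> (T *v y) $ i)"
proof -
  obtain v where v: "v \<noteq> 0" "cmat T *v v = c *s v" using ev by (auto simp: ce_cmat)
  define y :: "real^'n" where "y = (\<chi> i. cmod (v $ i))"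
  have "y \<noteq> 0" using v(1) by (auto simp: y_def vec_eq_iff)
  moreover have "\<forall>i. y $ i \<ge> 0" by (simp add: y_def)
  moreover have "cmod c * y $ i \<le> (T *v y) $ i" for i
  proof -
    have "cmod c * y $ i = cmod ((cmat T *v v) $ i)" using v(2) by (simp add: y_def norm_mult)
    also have "\<dots> = cmod (\<Sum>j\<in>UNIV. complex_of_real (T $ i $ j) * v $ j)"
      by (simp add: cmat_def matrix_vector_mult_def)
    also have "\<dots> \<le> (\<Sum>j\<in>UNIV. cmod (complex_of_real (T $ i $ j) * v $ j))"
      by (rule norm_sum)
    also have "\<dots> = (\<Sum>j\<in>UNIV. T $ i $ j * y $ j)"
      using nn by (simp add: y_def norm_mult)
    also have "\<dots> = (T *v y) $ i" by (simp add: matrix_vector_mult_def)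
    finally show ?thesis .
  qed
  ultimately show ?thesis by blast
qed



lemma cont_comp_mv: "continuous_on S (\<lambda>x::real^'n. (T *v x) $ i)"
  by (rule linear_continuous_on, rule bounded_linear_compose[OF bounded_linear_vec_nth matrix_vector_mul_bounded_linear])

lemma cont_nth: "continuous_on S (\<lambda>x::real^'n. x $ i)"
  by (rule linear_continuous_on, rule bounded_linear_vec_nth)

lemma mv_nonneg:
  fixes T :: "real^'n^'n"
  assumes "\<forall>i j. T $ i $ j \<ge> 0" "\<forall>j. x $ j \<ge> 0"
  shows "(T *v x) $ i \<ge> 0"
  using assms by (simp add: matrix_vector_mult_def sum_nonneg)

lemma mv_mono:
  fixes T :: "real^'n^'n"
  assumes "\<forall>i j. T $ i $ j \<ge> 0" "\<forall>j. x $ j \<le> y $ j"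
  shows "(T *v x) $ i \<le> (T *v y) $ i"
  using assms by (simp add: matrix_vector_mult_def sum_mono mult_left_mono)

lemma brouwer_eig:
  fixes T :: "real^'n^'n"
  assumes nn: "\<forall>i j. T $ i $ j \<ge> 0" and mu: "\<mu> \<ge> 0"
    and y: "\<forall>i. y $ i \<ge> 0" "y \<noteq> 0" "\<forall>i. \<mu> * y $ i \<le> (T *v y) $ i"
    and nz: "\<And>x. (\<forall>i. x $ i \<ge> 0) \<Longrightarrow> (\<Sum>i\<in>UNIV. x $ i) = 1 \<Longrightarrow>
              (\<forall>i. \<mu> * x $ i \<le> (T *v x) $ i) \<Longrightarrow> T *v x \<noteq> 0"
  shows "\<exists>x l. (\<forall>i. x $ i \<ge> 0) \<and> x \<noteq> 0 \<and> l \<ge> \<mu> \<and> T *v x = l *\<^sub>R x"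
proof -
  define K where "K = {x::real^'n. (\<forall>i. x $ i \<ge> 0) \<and> (\<Sum>i\<in>UNIV. x $ i) = 1 \<and>
              (\<forall>i. \<mu> * x $ i \<le> (T *v x) $ i)}"
  define s where "s x = (\<Sum>i\<in>UNIV. (T *v x) $ i)" for x
  have spos: "s x > 0" if "x \<in> K" for x
  proof -
    have x: "\<forall>i. x $ i \<ge> 0" "(\<Sum>i\<in>UNIV. x $ i) = 1" "\<forall>i. \<mu> * x $ i \<le> (T *v x) $ i"
      using that by (auto simp: K_def)
    have ge: "\<forall>i. (T *v x) $ i \<ge> 0" using mv_nonneg[OF nn x(1)] by blast
    have "T *v x \<noteq> 0" using nz x by blast
    then obtain i where "(T *v x) $ i \<noteq> 0" by (auto simp: vec_eq_iff)
    hence "(T *v x) $ i > 0" using ge by (simp add: order_le_neq_trans)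
    moreover have "(T *v x) $ i \<le> s x" unfolding s_def
      by (rule member_le_sum) (use ge in auto)
    ultimately show ?thesis by linarith
  qed
  define f where "f x = (1 / s x) *\<^sub>R (T *v x)" for x
  have compK: "compact K"
  unfolding compact_eq_bounded_closed
  proof (rule conjI)
    have "K \<subseteq> cbox 0 1"
    proof
      fix x assume "x \<in> K"
      hence x: "\<forall>i. x $ i \<ge> 0" "(\<Sum>i\<in>UNIV. x $ i) = 1" by (auto simp: K_def)
      have "x $ i \<le> 1" for i
      proof -
        have "x $ i \<le> (\<Sum>i\<in>UNIV. x $ i)" by (rule member_le_sum) (use x in auto)
        thus ?thesis using x by simp
      qed
      thus "x \<in> cbox 0 1" using x by (simp add: mem_box_cart)
    qed
    thus "bounded K" using bounded_cbox bounded_subset by blast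
    have "K = (\<Inter>i. {x. 0 \<le> x $ i}) \<inter> {x. (\<Sum>i\<in>UNIV. x $ i) = 1} \<inter> (\<Inter>i. {x. \<mu> * x $ i \<le> (T *v x) $ i})"
      unfolding K_def by auto
    moreover have "closed (\<Inter>i. {x::real^'n. 0 \<le> x $ i})"
      by (intro closed_INT ballI closed_Collect_le continuous_on_const cont_nth)
    moreover have "closed {x::real^'n. (\<Sum>i\<in>UNIV. x $ i) = 1}"
      by (intro closed_Collect_eq continuous_on_sum continuous_on_const cont_nth)
    moreover have "closed (\<Inter>i. {x. \<mu> * x $ i \<le> (T *v x) $ i})"
      by (intro closed_INT ballI closed_Collect_le continuous_on_mult continuous_on_const cont_nth cont_comp_mv)
    ultimately show "closed K" by (simp add: closed_Int)
  qed
  have convK: "convex K"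
  proof (rule convexI)
    fix x z :: "real^'n" and u v :: real
    assume xz: "x \<in> K" "z \<in> K" and uv0: "0 \<le> u" "0 \<le> v" "u + v = 1"
    have uv: "0 \<le> u \<and> 0 \<le> v \<and> u + v = 1" using uv0 by blast
    have x: "\<forall>i. x $ i \<ge> 0" "(\<Sum>i\<in>UNIV. x $ i) = 1" "\<forall>i. \<mu> * x $ i \<le> (T *v x) $ i"
      using xz(1) by (auto simp: K_def)
    have z: "\<forall>i. z $ i \<ge> 0" "(\<Sum>i\<in>UNIV. z $ i) = 1" "\<forall>i. \<mu> * z $ i \<le> (T *v z) $ i"
      using xz(2) by (auto simp: K_def)
    have "\<forall>i. (u *\<^sub>R x + v *\<^sub>R z) $ i \<ge> 0" using x z uv by simp
    moreover have "(\<Sum>i\<in>UNIV. (u *\<^sub>R x + v *\<^sub>R z) $ i) = 1"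
      using x z uv by (simp add: sum.distrib sum_distrib_left[symmetric])
    moreover have "\<mu> * (u *\<^sub>R x + v *\<^sub>R z) $ i \<le> (T *v (u *\<^sub>R x + v *\<^sub>R z)) $ i" for i
    proof -
      have "\<mu> * (u *\<^sub>R x + v *\<^sub>R z) $ i = u * (\<mu> * x $ i) + v * (\<mu> * z $ i)"
        by (simp add: algebra_simps)
      also have "\<dots> \<le> u * (T *v x) $ i + v * (T *v z) $ i"
        using x(3) z(3) uv by (intro add_mono mult_left_mono) auto
      also have "\<dots> = (T *v (u *\<^sub>R x + v *\<^sub>R z)) $ i"
        by (simp add: matrix_vector_right_distrib matrix_vector_mult_scaleR)
      finally show ?thesis .
    qed
    ultimately show "u *\<^sub>R x + v *\<^sub>R z \<in> K" unfolding K_def by blast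
  qed
  define y0 where "y0 = (1 / (\<Sum>i\<in>UNIV. y $ i)) *\<^sub>R y"
  have sy: "(\<Sum>i\<in>UNIV. y $ i) > 0"
  proof -
    obtain i where "y $ i \<noteq> 0" using y(2) by (auto simp: vec_eq_iff)
    hence "y $ i > 0" using y(1) by (simp add: order_le_neq_trans)
    moreover have "y $ i \<le> (\<Sum>i\<in>UNIV. y $ i)" by (rule member_le_sum) (use y(1) in auto)
    ultimately show ?thesis by linarith
  qed
  have "y0 \<in> K"
  proof -
    have "\<forall>i. y0 $ i \<ge> 0" using y(1) sy by (simp add: y0_def)
    moreover have "(\<Sum>i\<in>UNIV. y0 $ i) = 1" using sy by (simp add: y0_def sum_divide_distrib[symmetric])
    moreover have "\<mu> * y0 $ i \<le> (T *v y0) $ i" for i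
    proof -
      have "\<mu> * y0 $ i = (1 / (\<Sum>i\<in>UNIV. y $ i)) * (\<mu> * y $ i)" by (simp add: y0_def)
      also have "\<dots> \<le> (1 / (\<Sum>i\<in>UNIV. y $ i)) * (T *v y) $ i"
        using y(3) sy by (intro mult_left_mono) auto
      also have "\<dots> = (T *v y0) $ i" by (simp add: y0_def matrix_vector_mult_scaleR)
      finally show ?thesis .
    qed
    ultimately show ?thesis unfolding K_def by blast
  qed
  hence neK: "K \<noteq> {}" by blast
  have contf: "continuous_on K f"
  proof -
    have "continuous_on K s" unfolding s_def by (intro continuous_on_sum cont_comp_mv)
    hence "continuous_on K (\<lambda>x. 1 / s x)"
      using spos by (intro continuous_on_divide continuous_on_const) (auto dest!: spos)
    moreover have "continuous_on K (\<lambda>x. T *v x)"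
      by (rule linear_continuous_on, rule matrix_vector_mul_bounded_linear)
    ultimately show ?thesis unfolding f_def by (rule continuous_on_scaleR)
  qed
  have fK: "f \<in> K \<rightarrow> K"
  proof
    fix x assume xK: "x \<in> K"
    have x: "\<forall>i. x $ i \<ge> 0" "(\<Sum>i\<in>UNIV. x $ i) = 1" "\<forall>i. \<mu> * x $ i \<le> (T *v x) $ i"
      using xK by (auto simp: K_def)
    have sp: "s x > 0" using spos xK by blast
    have ge: "\<forall>i. (T *v x) $ i \<ge> 0" using mv_nonneg[OF nn x(1)] by blast
    have "\<forall>i. f x $ i \<ge> 0" using ge sp by (simp add: f_def)
    moreover have "(\<Sum>i\<in>UNIV. f x $ i) = 1" using sp
      by (simp add: f_def s_def sum_divide_distrib[symmetric])
    moreover have "\<mu> * f x $ i \<le> (T *v f x) $ i" for i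
    proof -
      have "\<mu> * (T *v x) $ i = (T *v (\<mu> *\<^sub>R x)) $ i" by (simp add: matrix_vector_mult_scaleR)
      also have "\<dots> \<le> (T *v (T *v x)) $ i"
        by (rule mv_mono[OF nn]) (use x(3) in simp)
      finally have "\<mu> * (T *v x) $ i \<le> (T *v (T *v x)) $ i" .
      hence "(1 / s x) * (\<mu> * (T *v x) $ i) \<le> (1 / s x) * (T *v (T *v x)) $ i"
        using sp by (intro mult_left_mono) auto
      thus ?thesis by (simp add: f_def matrix_vector_mult_scaleR algebra_simps)
    qed
    ultimately show "f x \<in> K" unfolding K_def by blast
  qed
  obtain x where xK: "x \<in> K" and fx: "f x = x"
    using brouwer[OF compK convK neK contf fK] by blast
  have x: "\<forall>i. x $ i \<ge> 0" "(\<Sum>i\<in>UNIV. x $ i) = 1" "\<forall>i. \<mu> * x $ i \<le> (T *v x) $ i"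
    using xK by (auto simp: K_def)
  have sp: "s x > 0" using spos xK by blast
  have Tx: "T *v x = s x *\<^sub>R x"
  proof -
    have "s x *\<^sub>R f x = T *v x" using sp by (simp add: f_def)
    thus ?thesis using fx by simp
  qed
  have "\<mu> = (\<Sum>i\<in>UNIV. \<mu> * x $ i)" using x(2) by (simp add: sum_distrib_left[symmetric])
  also have "\<dots> \<le> s x" unfolding s_def using x(3) by (intro sum_mono) auto
  finally have "\<mu> \<le> s x" .
  moreover have "x \<noteq> 0" using x(2) by auto
  ultimately show ?thesis using x(1) Tx by blast
qed



definition nn :: "real^'n^'m \<Rightarrow> bool" where "nn T \<longleftrightarrow> (\<forall>i j. T $ i $ j \<ge> 0)"

lemma brouwer_pos:
  fixes T :: "real^'n^'n"
  assumes "nn T" "\<mu> > 0" "\<forall>i. y $ i \<ge> 0" "y \<noteq> 0" "\<forall>i. \<mu> * y $ i \<le> (T *v y) $ i"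
  shows "\<exists>x l. (\<forall>i. x $ i \<ge> 0) \<and> x \<noteq> 0 \<and> l \<ge> \<mu> \<and> T *v x = l *\<^sub>R x"
proof (rule brouwer_eig)
  show "\<forall>i j. T $ i $ j \<ge> 0" using assms(1) by (simp add: nn_def)
  show "\<mu> \<ge> 0" using assms(2) by simp
  fix x :: "real^'n"
  assume x: "\<forall>i. x $ i \<ge> 0" "(\<Sum>i\<in>UNIV. x $ i) = 1" "\<forall>i. \<mu> * x $ i \<le> (T *v x) $ i"
  show "T *v x \<noteq> 0"
  proof
    assume "T *v x = 0"
    hence "\<forall>i. \<mu> * x $ i \<le> 0" using x(3) by simp
    hence "\<forall>i. x $ i \<le> 0" using assms(2) by (simp add: mult_le_0_iff)
    hence "\<forall>i. x $ i = 0" using x(1) by (simp add: order_antisym)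
    thus False using x(2) by simp
  qed
qed (use assms in auto)

lemma eig_exists:
  fixes T :: "real^'n^'n"
  assumes "nn T" shows "\<exists>c. complex_eigenvalue T c"
proof (cases "\<exists>x. (\<forall>i. x $ i \<ge> 0) \<and> (\<Sum>i\<in>UNIV. x $ i) = 1 \<and> (\<forall>i. 0 * x $ i \<le> (T *v x) $ i) \<and> T *v x = 0")
  case True
  then obtain x where x: "(\<Sum>i\<in>UNIV. x $ i) = 1" "T *v x = 0" by blast
  have "x \<noteq> 0" using x(1) by auto
  moreover have "T *v x = 0 *\<^sub>R x" using x(2) by simp
  ultimately show ?thesis using real_eig by blast
next
  case False
  define y :: "real^'n" where "y = axis undefined 1"
  have y: "\<forall>i. y $ i \<ge> 0" "y \<noteq> 0" "\<forall>i. 0 * y $ i \<le> (T *v y) $ i"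
    using mv_nonneg[of T y] assms by (auto simp: y_def axis_def nn_def vec_eq_iff)
  have "\<exists>x l. (\<forall>i. x $ i \<ge> 0) \<and> x \<noteq> 0 \<and> l \<ge> 0 \<and> T *v x = l *\<^sub>R x"
    by (rule brouwer_eig[OF _ _ y]) (use assms False in \<open>auto simp: nn_def\<close>)
  thus ?thesis using real_eig by blast
qed

lemma sr_set: "{cmod c | c. complex_eigenvalue T c} = cmod ` {c. complex_eigenvalue T c}"
  by auto

lemma sr_ge: "complex_eigenvalue T c \<Longrightarrow> cmod c \<le> spectral_radius T"
  unfolding spectral_radius_def sr_set
  by (rule Max_ge) (auto intro: finite_imageI eig_finite)

lemma sr_attained:
  assumes "nn T" shows "\<exists>c. complex_eigenvalue T c \<and> cmod c = spectral_radius T"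
proof -
  have "spectral_radius T \<in> cmod ` {c. complex_eigenvalue T c}"
    unfolding spectral_radius_def sr_set
    by (rule Max_in) (use eig_exists[OF assms] in \<open>auto intro: finite_imageI eig_finite\<close>)
  thus ?thesis by auto
qed

lemma sr_nonneg: assumes "nn T" shows "spectral_radius T \<ge> 0"
  using sr_attained[OF assms] by (metis norm_ge_zero)

lemma sr_transpose: "spectral_radius (transpose T) = spectral_radius T"
  unfolding spectral_radius_def eig_transpose_iff ..

lemma nn_transpose: "nn T \<Longrightarrow> nn (transpose T)"
  by (simp add: nn_def transpose_def)

lemma sr_lower:
  fixes T :: "real^'n^'n"
  assumes "nn T" "\<mu> > 0" "\<forall>i. y $ i \<ge> 0" "y \<noteq> 0" "\<forall>i. \<mu> * y $ i \<le> (T *v y) $ i"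
  shows "\<mu> \<le> spectral_radius T"
proof -
  obtain x l where x: "x \<noteq> 0" "l \<ge> \<mu>" "T *v x = l *\<^sub>R x" using brouwer_pos[OF assms] by blast
  have "complex_eigenvalue T (complex_of_real l)" by (rule real_eig[OF x(3,1)])
  hence "cmod (complex_of_real l) \<le> spectral_radius T" by (rule sr_ge)
  thus ?thesis using x(2) assms(2) by simp
qed

lemma sr_lower_T:
  fixes T :: "real^'n^'n"
  assumes "nn T" "\<mu> > 0" "\<forall>i. y $ i \<ge> 0" "y \<noteq> 0" "\<forall>i. \<mu> * y $ i \<le> (transpose T *v y) $ i"
  shows "\<mu> \<le> spectral_radius T"
  using sr_lower[OF nn_transpose[OF assms(1)] assms(2-5)] sr_transpose[of T] by simp

lemma sr_vec:
  fixes T :: "real^'n^'n"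
  assumes "nn T" "spectral_radius T > 0"
  shows "\<exists>x l. (\<forall>i. x $ i \<ge> 0) \<and> x \<noteq> 0 \<and> l \<ge> spectral_radius T \<and> T *v x = l *\<^sub>R x"
proof -
  obtain c where c: "complex_eigenvalue T c" "cmod c = spectral_radius T" using sr_attained[OF assms(1)] by blast
  obtain y where y: "\<forall>i. y $ i \<ge> 0" "y \<noteq> 0" "\<forall>i. cmod c * y $ i \<le> (T *v y) $ i"
    using abs_trick[OF _ c(1)] assms(1) by (auto simp: nn_def)
  show ?thesis using brouwer_pos[OF assms(1) _ y] c(2) assms(2) by simp
qed

lemma sr_vec_T:
  fixes T :: "real^'n^'n"
  assumes "nn T" "spectral_radius T > 0"
  shows "\<exists>x l. (\<forall>i. x $ i \<ge> 0) \<and> x \<noteq> 0 \<and> l \<ge> spectral_radius T \<and> transpose T *v x = l *\<^sub>R x"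
  using sr_vec[OF nn_transpose[OF assms(1)]] assms(2) sr_transpose[of T] by simp



lemma nn_mult: "nn (X::real^'n^'m) \<Longrightarrow> nn (Y::real^'p^'n) \<Longrightarrow> nn (X ** Y)"
  by (simp add: nn_def matrix_matrix_mult_def sum_nonneg)

lemma vm_nonneg: "nn (X::real^'n^'m) \<Longrightarrow> \<forall>i. x $ i \<ge> 0 \<Longrightarrow> (x v* X) $ j \<ge> 0"
  by (simp add: nn_def vector_matrix_mult_def sum_nonneg)

lemma vm_mono: "nn (X::real^'n^'m) \<Longrightarrow> \<forall>i. x $ i \<le> y $ i \<Longrightarrow> (x v* X) $ j \<le> (y v* X) $ j"
  by (simp add: nn_def vector_matrix_mult_def sum_mono mult_right_mono)

lemma mv_nonneg2: "nn (X::real^'n^'m) \<Longrightarrow> \<forall>i. x $ i \<ge> 0 \<Longrightarrow> (X *v x) $ j \<ge> 0"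
  by (simp add: nn_def matrix_vector_mult_def sum_nonneg)

lemma scaleR_vm: "(c *\<^sub>R x) v* (X::real^'n^'m) = c *\<^sub>R (x v* X)"
  by (simp add: vec_eq_iff vector_matrix_mult_def sum_distrib_left algebra_simps)

lemma step1:
  fixes A U V :: "real^'n^'m" and Ad Ud :: "real^'m^'n"
  assumes pA: "pen A Ad" and pU: "pen U Ud"
    and P1: "U ** Ud = A ** Ad" and P2: "Ud ** U = Ad ** A"
    and AUV: "A = U - V" and nUd: "nn Ud" and nV: "nn V" and nAd: "nn Ad"
  shows "spectral_radius (Ud ** V) < 1"
proof (rule ccontr)
  assume "\<not> spectral_radius (Ud ** V) < 1"
  hence ge1: "spectral_radius (Ud ** V) \<ge> 1" by simp
  obtain x l where x: "\<forall>i. x $ i \<ge> 0" "x \<noteq> 0" "l \<ge> spectral_radius (Ud ** V)" "(Ud ** V) *v x = l *\<^sub>R x"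
    using sr_vec[OF nn_mult[OF nUd nV]] ge1 by auto
  have l1: "l \<ge> 1" using x(3) ge1 by simp
  have UdUUd: "Ud ** U ** Ud = Ud" using pU by (simp add: pen_def)
  have AAdA: "A ** Ad ** A = A" using pA by (simp add: pen_def)
  have Px: "(Ad ** A) *v x = x"
  proof -
    have "x = (1/l) *\<^sub>R ((Ud ** V) *v x)" using x(4) l1 by simp
    hence "(Ad ** A) *v x = (1/l) *\<^sub>R ((Ad ** A) *v ((Ud ** V) *v x))"
      by (metis matrix_vector_mult_scaleR)
    also have "(Ad ** A) *v ((Ud ** V) *v x) = (Ud ** V) *v x"
      by (simp add: matrix_vector_mul_assoc matrix_mul_assoc P2[symmetric] UdUUd)
    finally show ?thesis using x(4) l1 by simp
  qed
  have "Ud *v (A *v x) = (Ud ** U) *v x - (Ud ** V) *v x"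
    by (simp add: AUV matrix_vector_mul_assoc matrix_vector_mult_diff_distrib matrix_vector_mult_diff_rdistrib)
  also have "\<dots> = (1 - l) *\<^sub>R x" using P2 Px x(4) by (simp add: algebra_simps)
  finally have UdAx: "Ud *v (A *v x) = (1 - l) *\<^sub>R x" .
  have Ax: "A *v x = (1 - l) *\<^sub>R (U *v x)"
  proof -
    have "A *v x = (A ** Ad ** A) *v x" using AAdA by simp
    also have "\<dots> = (U ** Ud) *v (A *v x)" by (simp add: P1 matrix_vector_mul_assoc)
    also have "\<dots> = (1 - l) *\<^sub>R (U *v x)" by (simp add: matrix_vector_mul_assoc[symmetric] UdAx matrix_vector_mult_scaleR)
    finally show ?thesis .
  qed
  have Vx: "V *v x = l *\<^sub>R (U *v x)"
  proof -
    have "V = U - A" using AUV by simp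
    hence "V *v x = U *v x - A *v x" by (simp add: matrix_vector_mult_diff_rdistrib)
    thus ?thesis using Ax by (simp add: algebra_simps)
  qed
  have eqv: "(1 - l) *\<^sub>R (Ad *v (V *v x)) = l *\<^sub>R x"
  proof -
    have "(1 - l) *\<^sub>R (V *v x) = l *\<^sub>R (A *v x)" unfolding Vx Ax by (simp add: mult.commute)
    hence "Ad *v ((1 - l) *\<^sub>R (V *v x)) = Ad *v (l *\<^sub>R (A *v x))" by simp
    thus ?thesis using Px by (simp add: matrix_vector_mult_scaleR matrix_vector_mul_assoc)
  qed
  obtain i where xi: "x $ i \<noteq> 0" using x(2) by (auto simp: vec_eq_iff)
  hence "x $ i > 0" using x(1) by (simp add: order_le_neq_trans)
  have "(Ad *v (V *v x)) $ i \<ge> 0"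
    using mv_nonneg2[OF nn_mult[OF nAd nV] x(1), of i] by (simp add: matrix_vector_mul_assoc)
  have e1: "(1 - l) * (Ad *v (V *v x)) $ i = l * x $ i"
    using arg_cong[where f="\<lambda>v. v $ i", OF eqv] by simp
  have e2: "(1 - l) * (Ad *v (V *v x)) $ i \<le> 0"
    by (rule mult_nonpos_nonneg) (use l1 \<open>(Ad *v (V *v x)) $ i \<ge> 0\<close> in auto)
  have "l * x $ i > 0" using l1 \<open>x $ i > 0\<close> by simp
  with e1 e2 show False by linarith
qed

lemma keyL:
  fixes A U V M N :: "real^'n^'m" and Ad Ud Md :: "real^'m^'n"
  assumes pA: "pen A Ad" and pU: "pen U Ud" and pM: "pen M Md"
    and P1: "U ** Ud = A ** Ad" and P2: "Ud ** U = Ad ** A"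
    and P3: "M ** Md = A ** Ad" and P4: "Md ** M = Ad ** A"
    and AUV: "A = U - V" and AMN: "A = M - N"
    and nUd: "nn Ud" and nV: "nn V" and nMd: "nn Md" and nN: "nn N" and nAd: "nn Ad"
    and z: "\<forall>i. z $ i \<ge> 0" "z \<noteq> 0" and l: "l > 0"
    and zH: "z v* (Ud ** V ** Md ** N) = l *\<^sub>R z"
  shows "\<exists>r. (\<forall>i. r $ i \<ge> 0) \<and> r \<noteq> 0 \<and> (\<forall>i. l * r $ i \<le> (r v* (Ud ** V)) $ i)"
proof -
  define P where "P = Ad ** A"
  define H where "H = Ud ** V ** Md ** N"
  have AAdA: "A ** Ad ** A = A" and AdAAd: "Ad ** A ** Ad = Ad" using pA by (simp_all add: pen_def)
  have UUdU: "U ** Ud ** U = U" and UdUUd: "Ud ** U ** Ud = Ud" using pU by (simp_all add: pen_def)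
  have MMdM: "M ** Md ** M = M" and MdMMd: "Md ** M ** Md = Md" using pM by (simp_all add: pen_def)
  have UP: "U ** P = U" unfolding P_def P2[symmetric] by (simp add: matrix_mul_assoc UUdU)
  have MP: "M ** P = M" unfolding P_def P4[symmetric] by (simp add: matrix_mul_assoc MMdM)
  have AP: "A ** P = A" unfolding P_def by (simp add: matrix_mul_assoc AAdA)
  have NP: "N ** P = N"
  proof -
    have "N = M - A" using AMN by simp
    thus ?thesis using MP AP by (simp add: matrix_sub_rdistrib)
  qed
  have VP: "V ** P = V"
  proof -
    have "V = U - A" using AUV by simp
    thus ?thesis using UP AP by (simp add: matrix_sub_rdistrib)
  qed
  have PUd: "P ** Ud = Ud" unfolding P_def P2[symmetric] by (rule UdUUd)
  have UdQ: "Ud ** (A ** Ad) = Ud" unfolding P1[symmetric] by (simp add: matrix_mul_assoc UdUUd)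
  have MdQ: "Md ** (A ** Ad) = Md" unfolding P3[symmetric] by (simp add: matrix_mul_assoc MdMMd)
  have AdQ: "Ad ** (A ** Ad) = Ad" by (simp add: matrix_mul_assoc AdAAd)
  have UdA: "Ud ** A = P - Ud ** V"
  proof -
    have "Ud ** A = Ud ** U - Ud ** V" using AUV by (simp add: matrix_sub_ldistrib)
    thus ?thesis unfolding P_def P2 .
  qed
  have MdA: "Md ** A = P - Md ** N"
  proof -
    have "Md ** A = Md ** M - Md ** N" using AMN by (simp add: matrix_sub_ldistrib)
    thus ?thesis unfolding P_def P4 .
  qed
  have HP: "H ** P = H" unfolding H_def by (simp add: matrix_mul_assoc[symmetric] NP)
  define K where "K = Ud + Ud ** V ** Md"
  have KA: "K ** A = P - H"
  proof -
    have "K ** A = Ud ** A + Ud ** V ** (Md ** A)"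
      by (simp add: K_def matrix_add_rdistrib matrix_mul_assoc)
    also have "\<dots> = (P - Ud ** V) + (Ud ** V ** P - Ud ** V ** (Md ** N))"
      unfolding UdA MdA by (simp add: matrix_sub_ldistrib)
    also have "Ud ** V ** P = Ud ** V" by (simp add: matrix_mul_assoc[symmetric] VP)
    finally show ?thesis by (simp add: H_def matrix_mul_assoc)
  qed
  have KQ: "K ** (A ** Ad) = K"
    by (simp add: K_def matrix_add_rdistrib matrix_mul_assoc[symmetric] UdQ MdQ)
  have AdVUd: "Ad ** V ** Ud = Ad - Ud"
  proof -
    have "V = U - A" using AUV by simp
    hence "Ad ** V ** Ud = Ad ** (U ** Ud) - (Ad ** A) ** Ud"
      by (simp add: matrix_sub_ldistrib matrix_sub_rdistrib matrix_mul_assoc)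
    also have "\<dots> = Ad - Ud" unfolding P1 P_def[symmetric] PUd AdQ ..
    finally show ?thesis .
  qed
  have zH': "z v* H = l *\<^sub>R z" using zH by (simp add: H_def)
  have zP: "z v* P = z"
  proof -
    have zz: "z = (1 / l) *\<^sub>R (z v* H)" using zH' l by simp
    have "z v* P = (1 / l) *\<^sub>R ((z v* H) v* P)" by (subst zz) (simp add: scaleR_vm)
    also have "(z v* H) v* P = z v* H" by (simp add: vector_matrix_mul_assoc HP)
    finally show ?thesis using zz by simp
  qed
  have zK: "z v* K = (1 - l) *\<^sub>R (z v* Ad)"
  proof -
    have "z v* K = z v* (K ** (A ** Ad))" by (simp only: KQ)
    also have "\<dots> = (z v* (K ** A)) v* Ad" by (simp add: vector_matrix_mul_assoc matrix_mul_assoc)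
    also have "z v* (K ** A) = z - l *\<^sub>R z" unfolding KA
      by (simp add: vector_matrix_mult_diff_rdistrib zP zH')
    also have "(z - l *\<^sub>R z) v* Ad = (1 - l) *\<^sub>R (z v* Ad)"
    proof -
      have "z - l *\<^sub>R z = (1 - l) *\<^sub>R z" by (simp add: scaleR_diff_left)
      thus ?thesis by (simp add: scaleR_vm)
    qed
    finally show ?thesis .
  qed
  have ineq1: "(z v* Ud) $ j \<le> (1 - l) * (z v* Ad) $ j" for j
  proof -
    have "z v* K = z v* Ud + z v* (Ud ** V ** Md)" by (simp add: K_def vector_matrix_mult_add_rdistrib)
    moreover have "(z v* (Ud ** V ** Md)) $ j \<ge> 0"
      by (rule vm_nonneg[OF nn_mult[OF nn_mult[OF nUd nV] nMd] z(1)])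
    ultimately show ?thesis using arg_cong[where f="\<lambda>v. v $ j", OF zK] by simp
  qed
  define r where "r = z v* (Ad ** V)"
  have r0: "\<forall>i. r $ i \<ge> 0" unfolding r_def using vm_nonneg[OF nn_mult[OF nAd nV] z(1)] by blast
  have rT: "r v* (Ud ** V) = r - z v* (Ud ** V)"
  proof -
    have "r v* (Ud ** V) = z v* ((Ad ** V ** Ud) ** V)" by (simp add: r_def vector_matrix_mul_assoc matrix_mul_assoc)
    also have "\<dots> = z v* (Ad ** V) - z v* (Ud ** V)" unfolding AdVUd
      by (simp add: matrix_sub_rdistrib vector_matrix_mult_diff_rdistrib)
    finally show ?thesis by (simp add: r_def)
  qed
  have ineq2: "(z v* (Ud ** V)) $ j \<le> (1 - l) * r $ j" for j
  proof -
    have "(z v* (Ud ** V)) $ j = ((z v* Ud) v* V) $ j" by (simp add: vector_matrix_mul_assoc)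
    also have "\<dots> \<le> (((1 - l) *\<^sub>R (z v* Ad)) v* V) $ j"
      by (rule vm_mono[OF nV]) (use ineq1 in simp)
    also have "\<dots> = (1 - l) * r $ j" by (simp add: scaleR_vm r_def vector_matrix_mul_assoc)
    finally show ?thesis .
  qed
  have concl: "\<forall>i. l * r $ i \<le> (r v* (Ud ** V)) $ i"
  proof
    fix i
    have "(r v* (Ud ** V)) $ i = r $ i - (z v* (Ud ** V)) $ i" using rT by (simp add: vec_eq_iff)
    thus "l * r $ i \<le> (r v* (Ud ** V)) $ i" using ineq2[of i] by (simp add: algebra_simps)
  qed
  have "r \<noteq> 0"
  proof
    assume r00: "r = 0"
    have "\<forall>j. (z v* (Ud ** V)) $ j = 0"
    proof
      fix j
      have "(z v* (Ud ** V)) $ j \<le> 0" using ineq2[of j] r00 by simp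
      moreover have "(z v* (Ud ** V)) $ j \<ge> 0" by (rule vm_nonneg[OF nn_mult[OF nUd nV] z(1)])
      ultimately show "(z v* (Ud ** V)) $ j = 0" by simp
    qed
    hence "z v* (Ud ** V) = 0" by (simp add: vec_eq_iff)
    moreover have "z v* H = ((z v* (Ud ** V)) v* Md) v* N" by (simp add: H_def vector_matrix_mul_assoc)
    ultimately have "z v* H = 0" by (simp add: vec_eq_iff vector_matrix_mult_def)
    hence "l *\<^sub>R z = 0" using zH' by simp
    thus False using l z(2) by simp
  qed
  thus ?thesis using r0 concl by blast
qed



lemma nonneg_nn: "nonneg_mat X \<Longrightarrow> nn X"
  by (simp add: nonneg_mat_def nn_def)

lemma comp_bound:
  fixes A U V M N :: "real^'n^'m" and Ad Ud Md :: "real^'m^'n"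
  assumes pA: "pen A Ad" and pU: "pen U Ud" and pM: "pen M Md"
    and P1: "U ** Ud = A ** Ad" and P2: "Ud ** U = Ad ** A"
    and P3: "M ** Md = A ** Ad" and P4: "Md ** M = Ad ** A"
    and AUV: "A = U - V" and AMN: "A = M - N"
    and nUd: "nn Ud" and nV: "nn V" and nMd: "nn Md" and nN: "nn N" and nAd: "nn Ad"
  shows "spectral_radius (Ud ** V ** Md ** N) \<le> spectral_radius (Ud ** V)
       \<and> spectral_radius (Ud ** V ** Md ** N) \<le> spectral_radius (Md ** N)"
proof (cases "spectral_radius (Ud ** V ** Md ** N) > 0")
  case False
  thus ?thesis using sr_nonneg[OF nn_mult[OF nUd nV]] sr_nonneg[OF nn_mult[OF nMd nN]] by linarith
next
  case True
  have nH: "nn (Ud ** V ** Md ** N)" by (intro nn_mult nUd nV nMd nN)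
  obtain z l where z: "\<forall>i. z $ i \<ge> 0" "z \<noteq> 0" "l \<ge> spectral_radius (Ud ** V ** Md ** N)"
      "transpose (Ud ** V ** Md ** N) *v z = l *\<^sub>R z"
    using sr_vec_T[OF nH True] by blast
  have l: "l > 0" using z(3) True by linarith
  have zH: "z v* (Ud ** V ** Md ** N) = l *\<^sub>R z" using z(4) by simp
  obtain r where r: "\<forall>i. r $ i \<ge> 0" "r \<noteq> 0" "\<forall>i. l * r $ i \<le> (r v* (Ud ** V)) $ i"
    using keyL[OF pA pU pM P1 P2 P3 P4 AUV AMN nUd nV nMd nN nAd z(1,2) l zH] by blast
  have b1: "l \<le> spectral_radius (Ud ** V)"
    by (rule sr_lower_T[OF nn_mult[OF nUd nV] l r(1,2)]) (use r(3) in simp)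
  define w where "w = z v* (Ud ** V)"
  have w0: "\<forall>i. w $ i \<ge> 0" unfolding w_def using vm_nonneg[OF nn_mult[OF nUd nV] z(1)] by blast
  have wMN: "w v* (Md ** N) = l *\<^sub>R z" unfolding w_def using zH
    by (simp add: vector_matrix_mul_assoc matrix_mul_assoc)
  have wnz: "w \<noteq> 0"
  proof
    assume "w = 0"
    hence "w v* (Md ** N) = 0" by (simp add: vec_eq_iff vector_matrix_mult_def)
    thus False using wMN l z(2) by simp
  qed
  have wH: "w v* (Md ** N ** Ud ** V) = l *\<^sub>R w"
  proof -
    have "w v* (Md ** N ** Ud ** V) = (w v* (Md ** N)) v* (Ud ** V)"
      by (simp add: vector_matrix_mul_assoc matrix_mul_assoc)
    also have "\<dots> = l *\<^sub>R w" unfolding wMN by (simp add: scaleR_vm w_def)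
    finally show ?thesis .
  qed
  obtain s where s: "\<forall>i. s $ i \<ge> 0" "s \<noteq> 0" "\<forall>i. l * s $ i \<le> (s v* (Md ** N)) $ i"
    using keyL[OF pA pM pU P3 P4 P1 P2 AMN AUV nMd nN nUd nV nAd w0 wnz l wH] by blast
  have b2: "l \<le> spectral_radius (Md ** N)"
    by (rule sr_lower_T[OF nn_mult[OF nMd nN] l s(1,2)]) (use s(3) in simp)
  show ?thesis using b1 b2 z(3) by linarith
qed

theorem theorem4p5:
  fixes A M N U V :: "real^'n^'m"
  assumes "nonneg_mat A"
    and "nonneg_mat (mp_inverse A)"
    and "proper_regular_splitting A M N"
    and "proper_regular_splitting A U V"
    and "mat_range (M + U - A) = mat_range A"
    and "mat_null (M + U - A) = mat_null A"
  shows "spectral_radius (mp_inverse U ** V ** mp_inverse M ** N)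
           \<le> min (spectral_radius (mp_inverse U ** V)) (spectral_radius (mp_inverse M ** N))
       \<and> min (spectral_radius (mp_inverse U ** V)) (spectral_radius (mp_inverse M ** N)) < 1"
proof -
  have AMN: "A = M - N" and rM: "mat_range M = mat_range A" and kM: "mat_null M = mat_null A"
    and nMd: "nn (mp_inverse M)" and nN: "nn N"
    using assms(3) by (auto simp: proper_regular_splitting_def proper_splitting_def nonneg_nn)
  have AUV: "A = U - V" and rU: "mat_range U = mat_range A" and kU: "mat_null U = mat_null A"
    and nUd: "nn (mp_inverse U)" and nV: "nn V"
    using assms(4) by (auto simp: proper_regular_splitting_def proper_splitting_def nonneg_nn)
  have nAd: "nn (mp_inverse A)" using assms(2) by (rule nonneg_nn)
  note pA = pen_mp[of A] and pU = pen_mp[of U] and pM = pen_mp[of M]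
  note PU = proper_proj[OF pA pU rU kU] and PM = proper_proj[OF pA pM rM kM]
  have c: "spectral_radius (mp_inverse U ** V ** mp_inverse M ** N) \<le> spectral_radius (mp_inverse U ** V)
       \<and> spectral_radius (mp_inverse U ** V ** mp_inverse M ** N) \<le> spectral_radius (mp_inverse M ** N)"
    by (rule comp_bound[OF pA pU pM PU PM AUV AMN nUd nV nMd nN nAd])
  have "spectral_radius (mp_inverse U ** V) < 1"
    by (rule step1[OF pA pU PU AUV nUd nV nAd])
  thus ?thesis using c by linarith
qed

end
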